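(* Let $\alpha\ge1$ and $\beta\ge1$. If $N\subseteq C$, then every outcome satisfying $\alpha$-proportional fairness also satisfies $(1+\alpha)$-individual fairness, and every outcome satisfying $\beta$-individual fairness also satisfies $2\beta$-proportional fairness. If $N=C$, then every outcome satisfying $\beta$-individual fairness also satisfies $(1+\beta)$-proportional fairness.
   Context: Let $(\mathcal X,d)$ be a metric space, $N=[n]$ a set of agents and $C$ a set of candidates located in $\mathcal X$, $k\in\mathbb N^+$; an outcome is $W\subseteq C$ with $|W|\le k$; $B(i,r)=\{x\in\mathcal X:d(i,x)\le r\}$; $d(i,W)=\min_{c\in W}d(i,c)$. $\alpha$-proportional fairness: there is no group $N'\subseteq N$ with $|N'|\ge n/k$ and candidate $c\in C\setminus W$ such that $\alpha\, d(i,c)<d(i,W)$ for all $i\in N'$. $\beta$-individual fairness (defined for instances with $N\subseteq C$): $d(i,W)\le\beta\, r(i)$ for all $i\in N$, where $r(i)=\min\{r\in\mathbb R: |B(i,r)\cap N|\ge n/k\}$. *)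

theory Defs
  imports "HOL-Analysis.Analysis"
begin

text \<open>Agents and candidates are points of a metric space (type class metric_space,
  with metric dist). N is the finite set of agents, C the finite set of candidates.\<close>

definition dset :: "'a::metric_space \<Rightarrow> 'a set \<Rightarrow> real" where
  "dset i W = Min ((\<lambda>c. dist i c) ` W)"

definition outcome :: "'a set \<Rightarrow> nat \<Rightarrow> 'a set \<Rightarrow> bool" where
  "outcome C k W \<longleftrightarrow> W \<subseteq> C \<and> card W \<le> k \<and> W \<noteq> {}"

definition prop_fair :: "real \<Rightarrow> 'a::metric_space set \<Rightarrow> 'a set \<Rightarrow> nat \<Rightarrow> 'a set \<Rightarrow> bool" where
  "prop_fair \<alpha> N C k W \<longleftrightarrow>
     \<not> (\<exists>N'\<subseteq>N. \<exists>c\<in>C - W. real (card N') \<ge> real (card N) / real k \<and>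
                 (\<forall>i\<in>N'. \<alpha> * dist i c < dset i W))"

definition rad :: "'a::metric_space set \<Rightarrow> nat \<Rightarrow> 'a \<Rightarrow> real" where
  "rad N k i = (LEAST r::real. real (card (cball i r \<inter> N)) \<ge> real (card N) / real k)"

definition ind_fair :: "real \<Rightarrow> 'a::metric_space set \<Rightarrow> nat \<Rightarrow> 'a set \<Rightarrow> bool" where
  "ind_fair \<beta> N k W \<longleftrightarrow> (\<forall>i\<in>N. dset i W \<le> \<beta> * rad N k i)"

end

theory Submission
  imports Defs
begin

lemma dset_le:
  assumes "finite W" "w \<in> W" shows "dset i W \<le> dist i w"
  unfolding dset_def using assms by (intro Min_le) auto

lemma dset_att:
  assumes "finite W" "W \<noteq> {}" shows "\<exists>w\<in>W. dset i W = dist i w"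
proof -
  have "Min ((\<lambda>c. dist i c) ` W) \<in> (\<lambda>c. dist i c) ` W"
    using assms by (intro Min_in) auto
  thus ?thesis unfolding dset_def by auto
qed

lemma dset_tri:
  assumes "finite W" "W \<noteq> {}" shows "dset i W \<le> dist i j + dset j W"
proof -
  obtain w where w: "w \<in> W" "dset j W = dist j w" using dset_att[OF assms] by blast
  have "dset i W \<le> dist i w" using dset_le[OF assms(1) w(1)] .
  also have "\<dots> \<le> dist i j + dist j w" by (rule dist_triangle)
  finally show ?thesis using w by simp
qed

lemma rad_props:
  fixes N :: "'a::metric_space set"
  assumes "finite N" "N \<noteq> {}" "k > 0"
  shows "real (card (cball i (rad N k i) \<inter> N)) \<ge> real (card N) / real k"
    and "\<And>y. real (card (cball i y \<inter> N)) \<ge> real (card N) / real k \<Longrightarrow> rad N k i \<le> y"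
    and "rad N k i \<ge> 0"
proof -
  define P where "P = (\<lambda>r::real. real (card (cball i r \<inter> N)) \<ge> real (card N) / real k)"
  define S where "S = {s \<in> dist i ` N. P s}"
  have fS: "finite S" unfolding S_def using assms(1) by simp
  have kk: "real (card N) / real k \<le> real (card N)"
  proof -
    have "real k \<ge> 1" using assms(3) by simp
    hence "real (card N) / real k \<le> real (card N) / 1" by (intro divide_left_mono) auto
    thus ?thesis by simp
  qed
  have npos: "real (card N) / real k > 0"
  proof -
    have "card N > 0" using assms(1,2) by (simp add: card_gt_0_iff)
    thus ?thesis using assms(3) by simp
  qed
  have minimal: "\<exists>s\<in>S. s \<le> y" if "P y" for y
  proof -
    have "real (card (cball i y \<inter> N)) > 0" using that npos unfolding P_def by linarith
    hence ne: "cball i y \<inter> N \<noteq> {}" by auto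
    define s where "s = Max (dist i ` (cball i y \<inter> N))"
    have sin: "s \<in> dist i ` (cball i y \<inter> N)" unfolding s_def using ne assms by (intro Max_in) auto
    have sy: "s \<le> y" using sin by auto
    have "cball i s \<inter> N = cball i y \<inter> N"
    proof
      show "cball i s \<inter> N \<subseteq> cball i y \<inter> N" using sy by auto
      show "cball i y \<inter> N \<subseteq> cball i s \<inter> N"
      proof
        fix x assume x: "x \<in> cball i y \<inter> N"
        have "dist i x \<le> s" unfolding s_def
          by (rule Max_ge) (use x assms(1) in auto)
        thus "x \<in> cball i s \<inter> N" using x by simp
      qed
    qed
    hence "P s" using that unfolding P_def by simp
    hence "s \<in> S" unfolding S_def using sin by auto
    thus ?thesis using sy by blast
  qed
  obtain j where j: "j \<in> N" using assms by auto
  define m where "m = Max (dist i ` N)"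
  have "cball i m \<inter> N = N"
  proof
    show "N \<subseteq> cball i m \<inter> N"
    proof
      fix x assume x: "x \<in> N"
      have "dist i x \<le> m" unfolding m_def by (rule Max_ge) (use x assms(1) in auto)
      thus "x \<in> cball i m \<inter> N" using x by simp
    qed
  qed auto
  hence "P m" unfolding P_def using kk by simp
  then obtain s0 where "s0 \<in> S" using minimal by blast
  hence Sne: "S \<noteq> {}" by auto
  define r0 where "r0 = Min S"
  have r0S: "r0 \<in> S" unfolding r0_def using fS Sne by (rule Min_in)
  have "rad N k i = r0" unfolding rad_def P_def[symmetric]
  proof (rule Least_equality)
    show "P r0" using r0S unfolding S_def by auto
    fix y assume "P y"
    then obtain s where "s \<in> S" "s \<le> y" using minimal by blast
    moreover have "r0 \<le> s" unfolding r0_def using fS \<open>s \<in> S\<close> by simp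
    ultimately show "r0 \<le> y" by simp
  qed
  thus "real (card (cball i (rad N k i) \<inter> N)) \<ge> real (card N) / real k"
    using r0S unfolding S_def P_def by auto
  show "rad N k i \<le> y" if hy: "real (card (cball i y \<inter> N)) \<ge> real (card N) / real k" for y
  proof -
    obtain s where "s \<in> S" "s \<le> y" using minimal[of y] hy unfolding P_def by blast
    moreover have "r0 \<le> s" unfolding r0_def using fS \<open>s \<in> S\<close> by simp
    ultimately show ?thesis using \<open>rad N k i = r0\<close> by simp
  qed
  show "rad N k i \<ge> 0" using \<open>rad N k i = r0\<close> r0S unfolding S_def by auto
qed

theorem theorem1:
  fixes N C :: "'a::metric_space set" and k :: nat and \<alpha> \<beta> :: real
  assumes "finite N" and "N \<noteq> {}" and "finite C" and "k > 0"
    and "\<alpha> \<ge> 1" and "\<beta> \<ge> 1"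
  shows "(N \<subseteq> C \<longrightarrow>
            (\<forall>W. outcome C k W \<and> prop_fair \<alpha> N C k W \<longrightarrow> ind_fair (1 + \<alpha>) N k W) \<and>
            (\<forall>W. outcome C k W \<and> ind_fair \<beta> N k W \<longrightarrow> prop_fair (2 * \<beta>) N C k W))
       \<and> (N = C \<longrightarrow>
            (\<forall>W. outcome C k W \<and> ind_fair \<beta> N k W \<longrightarrow> prop_fair (1 + \<beta>) N C k W))"
proof -
  note rp = rad_props[OF assms(1,2,4)]
  have npos: "real (card N) / real k > 0"
  proof -
    have "card N > 0" using assms(1,2) by (simp add: card_gt_0_iff)
    thus ?thesis using assms(4) by simp
  qed
  have P1: "ind_fair (1 + \<alpha>) N k W" if NC: "N \<subseteq> C" and o: "outcome C k W" and pf: "prop_fair \<alpha> N C k W" for W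
  proof -
    have fW: "finite W" and neW: "W \<noteq> {}" using o assms(3) unfolding outcome_def by (auto intro: finite_subset)
    show ?thesis unfolding ind_fair_def
    proof (rule ballI, rule ccontr)
      fix i assume iN: "i \<in> N" and nle: "\<not> dset i W \<le> (1 + \<alpha>) * rad N k i"
      define r where "r = rad N k i"
      have r0: "r \<ge> 0" unfolding r_def by (rule rp(3))
      have iW: "i \<notin> W"
      proof
        assume "i \<in> W"
        hence "dset i W \<le> 0" using dset_le[OF fW, of i i] by simp
        moreover have "(1 + \<alpha>) * r \<ge> 0" using r0 assms(5) by simp
        ultimately show False using nle r_def by simp
      qed
      define N' where "N' = cball i r \<inter> N"
      have "\<alpha> * dist j i < dset j W" if "j \<in> N'" for j
      proof -
        have dj: "dist i j \<le> r" using that unfolding N'_def by auto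
        have "dset i W \<le> dist i j + dset j W" by (rule dset_tri[OF fW neW])
        moreover have "dset i W > (1+\<alpha>) * r" using nle r_def by simp
        ultimately have "dset j W > (1+\<alpha>) * r - r" using dj by linarith
        moreover have "\<alpha> * dist j i \<le> \<alpha> * r" using dj assms(5) by (simp add: dist_commute)
        ultimately show ?thesis by (simp add: algebra_simps)
      qed
      moreover have "real (card N') \<ge> real (card N) / real k" unfolding N'_def r_def by (rule rp(1))
      moreover have "N' \<subseteq> N" unfolding N'_def by auto
      moreover have "i \<in> C - W" using iN NC iW by auto
      ultimately show False using pf unfolding prop_fair_def by blast
    qed
  qed
  have P2: "prop_fair (2 * \<beta>) N C k W" if o: "outcome C k W" and inf: "ind_fair \<beta> N k W" for W
    unfolding prop_fair_def
  proof
    assume "\<exists>N'\<subseteq>N. \<exists>c\<in>C - W. real (card N') \<ge> real (card N) / real k \<and>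
                 (\<forall>i\<in>N'. 2 * \<beta> * dist i c < dset i W)"
    then obtain N' c where N': "N' \<subseteq> N" "c \<in> C - W" "real (card N') \<ge> real (card N) / real k"
      "\<forall>i\<in>N'. 2 * \<beta> * dist i c < dset i W" by blast
    have fN': "finite N'" using N'(1) assms(1) finite_subset by auto
    have neN': "N' \<noteq> {}" using N'(3) npos by auto
    define R where "R = Max ((\<lambda>j. dist j c) ` N')"
    have "R \<in> (\<lambda>j. dist j c) ` N'" unfolding R_def using fN' neN' by (intro Max_in) auto
    then obtain i where i: "i \<in> N'" "dist i c = R" by auto
    have Rge: "dist j c \<le> R" if "j \<in> N'" for j unfolding R_def using fN' that by auto
    have "N' \<subseteq> cball i (2*R) \<inter> N"
    proof
      fix j assume j: "j \<in> N'"
      have "dist i j \<le> dist i c + dist j c" using dist_triangle[of i j c] by (simp add: dist_commute)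
      thus "j \<in> cball i (2*R) \<inter> N" using Rge[OF j] i j N'(1) by auto
    qed
    hence "card N' \<le> card (cball i (2*R) \<inter> N)" using assms(1) by (intro card_mono) auto
    hence "real (card N') \<le> real (card (cball i (2*R) \<inter> N))" by (rule of_nat_mono)
    hence "rad N k i \<le> 2*R" using N'(3) by (intro rp(2)) (rule order_trans)
    hence "\<beta> * rad N k i \<le> \<beta> * (2*R)" using assms(6) by (intro mult_left_mono) auto
    moreover have "dset i W \<le> \<beta> * rad N k i" using inf i(1) N'(1) unfolding ind_fair_def by blast
    ultimately have "dset i W \<le> \<beta> * (2 * R)" by (rule order_trans[rotated])
    thus False using N'(4) i by auto
  qed
  have P3: "prop_fair (1 + \<beta>) N C k W" if NC: "N = C" and o: "outcome C k W" and inf: "ind_fair \<beta> N k W" for W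
    unfolding prop_fair_def
  proof
    have fW: "finite W" and neW: "W \<noteq> {}" using o assms(3) unfolding outcome_def by (auto intro: finite_subset)
    assume "\<exists>N'\<subseteq>N. \<exists>c\<in>C - W. real (card N') \<ge> real (card N) / real k \<and>
                 (\<forall>i\<in>N'. (1 + \<beta>) * dist i c < dset i W)"
    then obtain N' c where N': "N' \<subseteq> N" "c \<in> C - W" "real (card N') \<ge> real (card N) / real k"
      "\<forall>i\<in>N'. (1 + \<beta>) * dist i c < dset i W" by blast
    have fN': "finite N'" using N'(1) assms(1) finite_subset by auto
    have neN': "N' \<noteq> {}" using N'(3) npos by auto
    define R where "R = Max ((\<lambda>j. dist j c) ` N')"
    have "R \<in> (\<lambda>j. dist j c) ` N'" unfolding R_def using fN' neN' by (intro Max_in) auto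
    then obtain i where i: "i \<in> N'" "dist i c = R" by auto
    have Rge: "dist j c \<le> R" if "j \<in> N'" for j unfolding R_def using fN' that by auto
    have "N' \<subseteq> cball c R \<inter> N"
    proof
      fix j assume "j \<in> N'" thus "j \<in> cball c R \<inter> N" using Rge[of j] N'(1) dist_commute[of c j] by auto
    qed
    hence "card N' \<le> card (cball c R \<inter> N)" using assms(1) by (intro card_mono) auto
    hence "real (card N') \<le> real (card (cball c R \<inter> N))" by (rule of_nat_mono)
    hence "rad N k c \<le> R" using N'(3) by (intro rp(2)) (rule order_trans)
    moreover have "dset c W \<le> \<beta> * rad N k c" using inf N'(2) NC unfolding ind_fair_def by auto
    moreover have "\<beta> * rad N k c \<le> \<beta> * R" if "rad N k c \<le> R" using assms(6) that by (intro mult_left_mono) auto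
    ultimately have "dset c W \<le> \<beta> * R" by linarith
    moreover have "dset i W \<le> dist i c + dset c W" by (rule dset_tri[OF fW neW])
    ultimately have "dset i W \<le> (1 + \<beta>) * dist i c" using i by (simp add: algebra_simps)
    thus False using N'(4) i by auto
  qed
  show ?thesis using P1 P2 P3 by blast
qed

end
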